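(* Let $m\ge n$ be positive integers of the same parity, and define \[ h(z)=\frac{1}{\sqrt2}\Bigl\{\bigl(\sqrt{z^2+1}+1\bigr)^{\frac{m+n}{2}}\bigl(\sqrt{z^2+1}+z\bigr)^{\frac{m-n}{2}}+(-1)^n\bigl(\sqrt{z^2+1}-1\bigr)^{\frac{m+n}{2}}\bigl(\sqrt{z^2+1}-z\bigr)^{\frac{m-n}{2}}\Bigr\}, \] which is a polynomial in $z$ (with the branch $\sqrt{z^2+1}=1$ at $z=0$). Let $\rho(t)=T_n(1-2t)+T_m(1+2t)$, whose degree is $m$ if $m>n$ and $2\lfloor m/2\rfloor$ if $m=n$. Then (i) $\deg h=\deg\rho$; (ii) $h(0)>0$; (iii) $h(z)\neq0$ for all $|z|<1$.
   Context: $T_k$ denotes the Chebyshev polynomial of the first kind, $T_k(\cos\theta)=\cos k\theta$. *)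

theory Defs
  imports "HOL-Analysis.Analysis" "HOL-Computational_Algebra.Polynomial"
begin

fun chebT :: "nat \<Rightarrow> real poly" where
  "chebT 0 = 1"
| "chebT (Suc 0) = [:0, 1:]"
| "chebT (Suc (Suc k)) = [:0, 2:] * chebT (Suc k) - chebT k"

definition rho :: "nat \<Rightarrow> nat \<Rightarrow> real poly" where
  "rho m n = pcompose (chebT n) [:1, -2:] + pcompose (chebT m) [:1, 2:]"

text \<open>The expression is
  invariant under replacing the square root by its negative (since m and n have
  the same parity), so the branch choice is immaterial; at z = 0 the principal
  branch gives 1.\<close>
definition hfun :: "nat \<Rightarrow> nat \<Rightarrow> complex \<Rightarrow> complex" where
  "hfun m n z = (let s = csqrt (z^2 + 1) in
     (1 / complex_of_real (sqrt 2)) *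
     ((s + 1) ^ ((m + n) div 2) * (s + z) ^ ((m - n) div 2)
      + (-1) ^ n * (s - 1) ^ ((m + n) div 2) * (s - z) ^ ((m - n) div 2)))"

end

theory Submission
  imports Defs "HOL-Real_Asymp.Real_Asymp"
begin


lemma poly_sum_le:
  fixes R :: "'a::comm_semiring_1 poly"
  assumes "degree R \<le> d"
  shows "poly R y = (\<Sum>i\<le>d. coeff R i * y ^ i)"
proof -
  have "poly R y = (\<Sum>i\<le>degree R. coeff R i * y ^ i)" by (rule poly_altdef)
  also have "\<dots> = (\<Sum>i\<le>d. coeff R i * y ^ i)"
    by (rule sum.mono_neutral_left) (use assms in \<open>auto simp: coeff_eq_0\<close>)
  finally show ?thesis .
qed

lemma poly_lim:
  fixes R :: "'a::real_normed_field poly"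
  assumes "degree R \<le> d" and "((\<lambda>x. g x / of_real x) \<longlongrightarrow> L) at_top"
  shows "((\<lambda>x::real. poly R (g x) / of_real x ^ d) \<longlongrightarrow> coeff R d * L ^ d) at_top"
proof -
  have ev: "\<forall>\<^sub>F x in at_top. (\<Sum>i\<le>d. coeff R i * (g x / of_real x) ^ i * (1 / of_real x) ^ (d - i))
      = poly R (g x) / of_real x ^ d"
    using eventually_gt_at_top[of "0::real"]
  proof eventually_elim
    case (elim x)
    have "poly R (g x) / of_real x ^ d = (\<Sum>i\<le>d. coeff R i * g x ^ i / of_real x ^ d)"
      by (simp add: poly_sum_le[OF assms(1)] sum_divide_distrib)
    also have "\<dots> = (\<Sum>i\<le>d. coeff R i * (g x / of_real x) ^ i * (1 / of_real x) ^ (d - i))"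
    proof (rule sum.cong[OF refl])
      fix i assume "i \<in> {..d}"
      then have "d = i + (d - i)" by simp
      then have "(of_real x :: 'a) ^ d = of_real x ^ i * of_real x ^ (d - i)"
        by (metis power_add)
      then show "coeff R i * g x ^ i / of_real x ^ d = coeff R i * (g x / of_real x) ^ i * (1 / of_real x) ^ (d - i)"
        using elim by (simp add: power_divide field_simps)
    qed
    finally show ?case by simp
  qed
  have lim0: "((\<lambda>x::real. 1 / (of_real x :: 'a)) \<longlongrightarrow> 0) at_top"
  proof -
    have "((\<lambda>x::real. of_real (1 / x) :: 'a) \<longlongrightarrow> of_real 0) at_top"
      by (rule tendsto_of_real) real_asymp
    then show ?thesis by simp
  qed
  have "((\<lambda>x. \<Sum>i\<le>d. coeff R i * (g x / of_real x) ^ i * (1 / of_real x) ^ (d - i))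
      \<longlongrightarrow> (\<Sum>i\<le>d. coeff R i * L ^ i * 0 ^ (d - i))) at_top"
    by (intro tendsto_intros assms(2) lim0)
  moreover have "(\<Sum>i\<le>d. coeff R i * L ^ i * (0::'a) ^ (d - i)) = coeff R d * L ^ d"
    by (subst sum.remove[of _ d]) (auto intro!: sum.neutral)
  ultimately have "((\<lambda>x. \<Sum>i\<le>d. coeff R i * (g x / of_real x) ^ i * (1 / of_real x) ^ (d - i))
      \<longlongrightarrow> coeff R d * L ^ d) at_top" by simp
  then show ?thesis by (rule tendsto_cong[OF ev, THEN iffD1])
qed

lemma deg_from_limit:
  fixes p :: "'a::real_normed_field poly"
  assumes "((\<lambda>x::real. poly p (of_real x) / of_real x ^ d) \<longlongrightarrow> c) at_top" and "c \<noteq> 0"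
  shows "degree p = d"
proof -
  have gid: "((\<lambda>x::real. (of_real x :: 'a) / of_real x) \<longlongrightarrow> 1) at_top"
  proof -
    have "\<forall>\<^sub>F x in at_top. (of_real x :: 'a) / of_real x = 1"
      using eventually_gt_at_top[of "0::real"] by eventually_elim simp
    then show ?thesis by (rule tendsto_eventually)
  qed
  show ?thesis
  proof (rule ccontr)
    assume ne: "degree p \<noteq> d"
    show False
    proof (cases "degree p < d")
      case True
      have "((\<lambda>x::real. poly p (of_real x) / of_real x ^ d) \<longlongrightarrow> coeff p d * 1 ^ d) at_top"
        by (rule poly_lim[OF _ gid]) (use True in auto)
      then have "c = coeff p d * 1 ^ d"
        by (rule tendsto_unique[OF trivial_limit_at_top_linorder assms(1)])
      then have "c = 0" using True by (simp add: coeff_eq_0)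
      then show False using assms(2) by simp
    next
      case False
      then have lt: "d < degree p" using ne by simp
      then have p0: "p \<noteq> 0" by auto
      have l1: "((\<lambda>x::real. poly p (of_real x) / of_real x ^ degree p) \<longlongrightarrow> lead_coeff p * 1 ^ degree p) at_top"
        by (rule poly_lim[OF _ gid]) auto
      have lim0: "((\<lambda>x::real. 1 / (of_real x :: 'a)) \<longlongrightarrow> 0) at_top"
      proof -
        have "((\<lambda>x::real. of_real (1 / x) :: 'a) \<longlongrightarrow> of_real 0) at_top"
          by (rule tendsto_of_real) real_asymp
        then show ?thesis by simp
      qed
      have l2: "((\<lambda>x::real. poly p (of_real x) / of_real x ^ d * (1 / of_real x) ^ (degree p - d)) \<longlongrightarrow> c * 0 ^ (degree p - d)) at_top"
        by (intro tendsto_intros assms(1) lim0)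
      have ev: "\<forall>\<^sub>F x in at_top. poly p (of_real x) / of_real x ^ d * (1 / of_real x) ^ (degree p - d) = poly p (of_real x) / of_real x ^ degree p"
        using eventually_gt_at_top[of "0::real"]
      proof eventually_elim
        case (elim x)
        have "degree p = d + (degree p - d)" using lt by simp
        then have "(of_real x :: 'a) ^ degree p = of_real x ^ d * of_real x ^ (degree p - d)"
          by (metis power_add)
        then show ?case using elim by (simp add: power_divide field_simps)
      qed
      have "((\<lambda>x::real. poly p (of_real x) / of_real x ^ degree p) \<longlongrightarrow> 0) at_top"
        using tendsto_cong[OF ev, THEN iffD1, OF l2] lt by (simp add: zero_power)
      then have "lead_coeff p * 1 ^ degree p = 0"
        by (rule tendsto_unique[OF trivial_limit_at_top_linorder l1])
      then have "lead_coeff p = 0" by simp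
      then show False using p0 by simp
    qed
  qed
qed



lemma poly_lim_real:
  fixes R :: "real poly"
  assumes "degree R \<le> d" and "((\<lambda>x. g x / x) \<longlongrightarrow> L) at_top"
  shows "((\<lambda>x::real. poly R (g x) / x ^ d) \<longlongrightarrow> coeff R d * L ^ d) at_top"
  using poly_lim[of R d g L] assms by simp

lemma mult_02: "[:0, 2:] * p = pCons 0 (smult 2 p)"
  by (simp add: mult_pCons_left)

lemma cheb_deg: "degree (chebT n) \<le> n"
proof (induction n rule: chebT.induct)
  case (3 k)
  then show ?case
    by (simp only: chebT.simps mult_02)
      (rule degree_diff_le; use degree_pCons_le[of 0 "smult 2 (chebT (Suc k))"] in auto)
qed auto

lemma cheb_lead: "coeff (chebT (Suc n)) (Suc n) = 2 ^ n"
proof (induction n rule: nat_less_induct)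
  case (1 n)
  show ?case
  proof (cases n)
    case 0 then show ?thesis by simp
  next
    case (Suc k)
    have "coeff (chebT k) (Suc (Suc k)) = 0"
      using cheb_deg[of k] by (simp add: coeff_eq_0)
    then show ?thesis using 1 Suc by (simp add: mult_02)
  qed
qed

lemma cheb_par: "odd (n + i) \<Longrightarrow> coeff (chebT n) i = 0"
proof (induction n arbitrary: i rule: chebT.induct)
  case 1 then show ?case by (cases i) auto
next
  case 2
  then have "i \<noteq> 1" by auto
  then show ?case by (cases i) (auto simp: coeff_pCons split: nat.splits)
next
  case (3 k)
  show ?case
  proof (cases i)
    case 0 then show ?thesis using 3 by (simp add: mult_02)
  next
    case (Suc i')
    then show ?thesis using 3 by (simp add: mult_02)
  qed
qed



lemma deg_from_limit_real:
  fixes p :: "real poly"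
  assumes "((\<lambda>x::real. poly p x / x ^ d) \<longlongrightarrow> c) at_top" and "c \<noteq> 0"
  shows "degree p = d"
  using deg_from_limit[of p d c] assms by simp

lemma poly_rho: "poly (rho m n) t = poly (chebT n) (1 - 2 * t) + poly (chebT m) (1 + 2 * t)"
  by (simp add: rho_def poly_pcompose mult.commute)

lemma limA: "((\<lambda>t::real. (1 - 2 * t) / t) \<longlongrightarrow> -2) at_top" by real_asymp
lemma limB: "((\<lambda>t::real. (1 + 2 * t) / t) \<longlongrightarrow> 2) at_top" by real_asymp
lemma limC: "((\<lambda>t::real. (2 * t - 1) / t) \<longlongrightarrow> 2) at_top" by real_asymp

lemma cheb_lead': "n \<ge> 1 \<Longrightarrow> coeff (chebT n) n = 2 ^ (n - 1)"
  using cheb_lead[of "n - 1"] by simp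

lemma rho_deg:
  assumes "n \<ge> 1" and "m \<ge> n" and "even (m + n)"
  shows "degree (rho m n) = (if m > n then m else 2 * (m div 2))"
proof (cases "m > n")
  case True
  have L1: "((\<lambda>t. poly (chebT n) (1 - 2 * t) / t ^ m) \<longlongrightarrow> coeff (chebT n) m * (-2) ^ m) at_top"
    by (rule poly_lim_real[OF _ limA]) (use cheb_deg[of n] True in auto)
  have L2: "((\<lambda>t. poly (chebT m) (1 + 2 * t) / t ^ m) \<longlongrightarrow> coeff (chebT m) m * 2 ^ m) at_top"
    by (rule poly_lim_real[OF cheb_deg limB])
  have "coeff (chebT n) m = 0" using cheb_deg[of n] True by (simp add: coeff_eq_0)
  then have "((\<lambda>t. poly (rho m n) t / t ^ m) \<longlongrightarrow> 0 + 2 ^ (m - 1) * 2 ^ m) at_top"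
    using tendsto_add[OF L1 L2] cheb_lead'[of m] assms True by (simp add: poly_rho add_divide_distrib)
  then have "degree (rho m n) = m" by (rule deg_from_limit_real) simp
  then show ?thesis using True by simp
next
  case False
  then have mn: "m = n" using assms by simp
  show ?thesis
  proof (cases "even n")
    case True
    have L1: "((\<lambda>t. poly (chebT n) (1 - 2 * t) / t ^ n) \<longlongrightarrow> coeff (chebT n) n * (-2) ^ n) at_top"
      by (rule poly_lim_real[OF cheb_deg limA])
    have L2: "((\<lambda>t. poly (chebT n) (1 + 2 * t) / t ^ n) \<longlongrightarrow> coeff (chebT n) n * 2 ^ n) at_top"
      by (rule poly_lim_real[OF cheb_deg limB])
    have "((\<lambda>t. poly (rho m n) t / t ^ n) \<longlongrightarrow> 2 ^ (n - 1) * 2 ^ n + 2 ^ (n - 1) * 2 ^ n) at_top"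
      using tendsto_add[OF L1 L2] cheb_lead'[of n] assms True mn by (simp add: poly_rho add_divide_distrib)
    then have "degree (rho m n) = n" by (rule deg_from_limit_real) simp
    then show ?thesis using True mn by simp
  next
    case odd: False
    define c :: real where "c = 2 ^ (n - 1)"
    define R where "R = chebT n - monom c n"
    have cR: "coeff R n = 0" using cheb_lead'[of n] assms by (simp add: R_def c_def coeff_diff)
    have dR: "degree R \<le> n - 1"
    proof (rule degree_le, intro allI impI)
      fix i assume "n - 1 < i"
      then have "i = n \<or> i > n" using assms by auto
      then show "coeff R i = 0"
        using cR cheb_deg[of n] by (auto simp: R_def coeff_diff coeff_eq_0 coeff_monom)
    qed
    have cR1: "coeff R (n - 1) = 0"
      using cheb_par[of n "n - 1"] odd assms by (simp add: R_def coeff_diff coeff_monom)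
    have P: "poly (chebT n) y = c * y ^ n + poly R y" for y
      by (simp add: R_def poly_monom)
    have L1: "((\<lambda>t. poly R (1 - 2 * t) / t ^ (n - 1)) \<longlongrightarrow> coeff R (n - 1) * (-2) ^ (n - 1)) at_top"
      by (rule poly_lim_real[OF dR limA])
    have L2: "((\<lambda>t. poly R (1 + 2 * t) / t ^ (n - 1)) \<longlongrightarrow> coeff R (n - 1) * 2 ^ (n - 1)) at_top"
      by (rule poly_lim_real[OF dR limB])
    have L3: "((\<lambda>t. \<Sum>i<n. ((2 * t - 1) / t) ^ (n - Suc i) * ((1 + 2 * t) / t) ^ i) \<longlongrightarrow>
        (\<Sum>i<n. (2::real) ^ (n - Suc i) * 2 ^ i)) at_top"
      by (intro tendsto_intros limB limC)
    have S: "(\<Sum>i<n. (2::real) ^ (n - Suc i) * 2 ^ i) = n * 2 ^ (n - 1)"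
    proof -
      have "(\<Sum>i<n. (2::real) ^ (n - Suc i) * 2 ^ i) = (\<Sum>i<n. 2 ^ (n - 1))"
        by (rule sum.cong[OF refl]) (auto simp flip: power_add)
      then show ?thesis by simp
    qed
    have ev: "\<forall>\<^sub>F t in at_top. poly (rho m n) t / t ^ (n - 1) =
       2 * c * (\<Sum>i<n. ((2 * t - 1) / t) ^ (n - Suc i) * ((1 + 2 * t) / t) ^ i)
       + poly R (1 - 2 * t) / t ^ (n - 1) + poly R (1 + 2 * t) / t ^ (n - 1)"
      using eventually_gt_at_top[of "0::real"]
    proof eventually_elim
      case (elim t)
      have o1: "(1 - 2 * t) ^ n = - ((2 * t - 1) ^ n)"
        using odd by (metis minus_diff_eq power_minus_odd)
      have d: "(1 + 2 * t) ^ n - (2 * t - 1) ^ n = 2 * (\<Sum>i<n. (2 * t - 1) ^ (n - Suc i) * (1 + 2 * t) ^ i)"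
        by (simp add: power_diff_sumr2)
      have e: "(\<Sum>i<n. (2 * t - 1) ^ (n - Suc i) * (1 + 2 * t) ^ i) / t ^ (n - 1)
          = (\<Sum>i<n. ((2 * t - 1) / t) ^ (n - Suc i) * ((1 + 2 * t) / t) ^ i)"
        unfolding sum_divide_distrib
      proof (rule sum.cong[OF refl])
        fix i assume "i \<in> {..<n}"
        then have "n - 1 = (n - Suc i) + i" by auto
        then have "t ^ (n - 1) = t ^ (n - Suc i) * t ^ i" by (metis power_add)
        then show "(2 * t - 1) ^ (n - Suc i) * (1 + 2 * t) ^ i / t ^ (n - 1)
          = ((2 * t - 1) / t) ^ (n - Suc i) * ((1 + 2 * t) / t) ^ i"
          using elim by (simp add: power_divide)
      qed
      have "poly (rho m n) t = c * ((1 + 2 * t) ^ n - (2 * t - 1) ^ n) + poly R (1 - 2 * t) + poly R (1 + 2 * t)"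
        by (simp only: mn poly_rho P o1) (simp add: algebra_simps)
      then have "poly (rho m n) t / t ^ (n - 1) = 2 * c * ((\<Sum>i<n. (2 * t - 1) ^ (n - Suc i) * (1 + 2 * t) ^ i) / t ^ (n - 1))
        + poly R (1 - 2 * t) / t ^ (n - 1) + poly R (1 + 2 * t) / t ^ (n - 1)"
        unfolding d by (simp add: add_divide_distrib)
      then show ?case by (simp only: e)
    qed
    have "((\<lambda>t. 2 * c * (\<Sum>i<n. ((2 * t - 1) / t) ^ (n - Suc i) * ((1 + 2 * t) / t) ^ i)
       + poly R (1 - 2 * t) / t ^ (n - 1) + poly R (1 + 2 * t) / t ^ (n - 1))
       \<longlongrightarrow> 2 * c * (n * 2 ^ (n - 1)) + 0 + 0) at_top"
      using tendsto_add[OF tendsto_add[OF tendsto_mult[OF tendsto_const L3] L1] L2] cR1 S by simp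
    then have "((\<lambda>t. poly (rho m n) t / t ^ (n - 1)) \<longlongrightarrow> 2 * c * (n * 2 ^ (n - 1)) + 0 + 0) at_top"
      using tendsto_cong[OF ev] by simp
    then have "degree (rho m n) = n - 1" by (rule deg_from_limit_real) (use assms in \<open>simp add: c_def\<close>)
    then show ?thesis using odd mn by (simp add: odd_two_times_div_two_nat)
  qed
qed



definition hpoly :: "nat \<Rightarrow> nat \<Rightarrow> complex poly" where
  "hpoly m n = smult (1 / complex_of_real (sqrt 2))
     (\<Sum>a\<le>(m + n) div 2. \<Sum>b\<le>(m - n) div 2.
        smult (of_nat ((m + n) div 2 choose a) * of_nat ((m - n) div 2 choose b) * (1 + (-1) ^ (a + b)))
          ([:1, 0, 1:] ^ ((a + b) div 2) * [:0, 1:] ^ ((m - n) div 2 - b)))"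

lemma neg1_par: "even (x + y) \<Longrightarrow> (-1::complex) ^ x = (-1) ^ y"
  by (metis even_add neg_one_even_power neg_one_odd_power)

lemma hpoly_eval:
  assumes "m \<ge> n" and "even (m + n)"
  shows "poly (hpoly m n) z = hfun m n z"
proof -
  define k where "k = (m + n) div 2"
  define j where "j = (m - n) div 2"
  define s where "s = csqrt (z^2 + 1)"
  have s2: "s^2 = z^2 + 1" by (simp add: s_def)
  have kj: "k + j = m" using assms by (simp add: k_def j_def) presburger
  have E1: "(s + 1) ^ k * (s + z) ^ j = (\<Sum>a\<le>k. \<Sum>b\<le>j. of_nat (k choose a) * of_nat (j choose b) * s ^ (a + b) * z ^ (j - b))"
    unfolding binomial_ring[of s 1 k] binomial_ring[of s z j] sum_product
    by (intro sum.cong refl) (simp add: power_add algebra_simps)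
  have E2: "(-1) ^ n * (s - 1) ^ k * (s - z) ^ j = (\<Sum>a\<le>k. \<Sum>b\<le>j. of_nat (k choose a) * of_nat (j choose b) * s ^ (a + b) * z ^ (j - b) * (-1) ^ (a + b))"
  proof -
    have "(-1) ^ n * (s - 1) ^ k * (s - z) ^ j = (-1) ^ n * (s + (-1)) ^ k * (s + (-z)) ^ j" by simp
    also have "\<dots> = (\<Sum>a\<le>k. \<Sum>b\<le>j. of_nat (k choose a) * of_nat (j choose b) * s ^ (a + b) * z ^ (j - b) * ((-1) ^ n * (-1) ^ (k - a) * (-1) ^ (j - b)))"
    proof -
      have "(s + (-1)) ^ k * (s + (-z)) ^ j = (\<Sum>a\<le>k. \<Sum>b\<le>j. (of_nat (k choose a) * s ^ a * (-1) ^ (k - a)) * (of_nat (j choose b) * s ^ b * (-z) ^ (j - b)))"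
        by (simp only: binomial_ring[of s "-1" k] binomial_ring[of s "-z" j] sum_product)
      then have "(-1) ^ n * (s + (-1)) ^ k * (s + (-z)) ^ j = (\<Sum>a\<le>k. \<Sum>b\<le>j. (-1) ^ n * ((of_nat (k choose a) * s ^ a * (-1) ^ (k - a)) * (of_nat (j choose b) * s ^ b * (-z) ^ (j - b))))"
        by (simp add: sum_distrib_left mult.assoc)
      also have "\<dots> = (\<Sum>a\<le>k. \<Sum>b\<le>j. of_nat (k choose a) * of_nat (j choose b) * s ^ (a + b) * z ^ (j - b) * ((-1) ^ n * (-1) ^ (k - a) * (-1) ^ (j - b)))"
        by (intro sum.cong refl) (simp add: power_add power_minus' algebra_simps)
      finally show ?thesis .
    qed
    also have "\<dots> = (\<Sum>a\<le>k. \<Sum>b\<le>j. of_nat (k choose a) * of_nat (j choose b) * s ^ (a + b) * z ^ (j - b) * (-1) ^ (a + b))"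
    proof (intro sum.cong refl)
      fix a b assume "a \<in> {..k}" "b \<in> {..j}"
      then have "even ((n + (k - a) + (j - b)) + (a + b))" using kj assms by auto
      then have "(-1::complex) ^ (n + (k - a) + (j - b)) = (-1) ^ (a + b)" by (rule neg1_par)
      then show "of_nat (k choose a) * of_nat (j choose b) * s ^ (a + b) * z ^ (j - b) * ((-1) ^ n * (-1) ^ (k - a) * (-1) ^ (j - b))
        = of_nat (k choose a) * of_nat (j choose b) * s ^ (a + b) * z ^ (j - b) * (-1) ^ (a + b)"
        by (simp add: power_add)
    qed
    finally show ?thesis .
  qed
  have T: "s ^ (a + b) * (1 + (-1) ^ (a + b)) = (z^2 + 1) ^ ((a + b) div 2) * (1 + (-1) ^ (a + b))" for a b :: nat
  proof (cases "even (a + b)")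
    case True
    then have "s ^ (a + b) = (s^2) ^ ((a + b) div 2)"
      by (metis dvd_mult_div_cancel power_mult)
    then show ?thesis using s2 by simp
  next
    case False
    then show ?thesis by simp
  qed
  have "hfun m n z = (1 / complex_of_real (sqrt 2)) * ((s + 1) ^ k * (s + z) ^ j + (-1) ^ n * (s - 1) ^ k * (s - z) ^ j)"
    by (simp add: hfun_def s_def k_def j_def Let_def mult.assoc)
  also have "\<dots> = (1 / complex_of_real (sqrt 2)) * (\<Sum>a\<le>k. \<Sum>b\<le>j. of_nat (k choose a) * of_nat (j choose b) * (s ^ (a + b) * (1 + (-1) ^ (a + b))) * z ^ (j - b))"
    unfolding E1 E2 sum.distrib[symmetric] by (simp add: algebra_simps)
  also have "\<dots> = poly (hpoly m n) z"
  proof -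
    have pz: "poly [:1, 0, 1:] z = z^2 + 1" by (simp add: power2_eq_square)
    show ?thesis
      unfolding T hpoly_def k_def[symmetric] j_def[symmetric]
      by (simp add: poly_sum pz sum_distrib_left poly_power) (intro sum.cong refl; simp add: algebra_simps power2_eq_square)
  qed
  finally show ?thesis by simp
qed



definition Hr :: "nat \<Rightarrow> nat \<Rightarrow> real \<Rightarrow> real" where
  "Hr m n x = (1 / sqrt 2) * ((sqrt (x^2+1) + 1) ^ ((m + n) div 2) * (sqrt (x^2+1) + x) ^ ((m - n) div 2)
      + (-1) ^ n * (sqrt (x^2+1) - 1) ^ ((m + n) div 2) * (sqrt (x^2+1) - x) ^ ((m - n) div 2))"

lemma hfun_real: "hfun m n (of_real x) = of_real (Hr m n x)"
proof -
  have "csqrt ((of_real x)^2 + 1) = of_real (sqrt (x^2 + 1))"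
    using csqrt_of_real[of "x^2+1"] by simp
  then show ?thesis by (simp add: hfun_def Hr_def Let_def)
qed

lemma l1: "((\<lambda>x::real. (sqrt (x^2+1) + 1) / x) \<longlongrightarrow> 1) at_top" by real_asymp
lemma l2: "((\<lambda>x::real. (sqrt (x^2+1) - 1) / x) \<longlongrightarrow> 1) at_top" by real_asymp
lemma l3: "((\<lambda>x::real. (sqrt (x^2+1) + x) / x) \<longlongrightarrow> 2) at_top" by real_asymp
lemma l4: "((\<lambda>x::real. (sqrt (x^2+1) - x) / x) \<longlongrightarrow> 0) at_top" by real_asymp

lemma deg_from_real:
  assumes "((\<lambda>x. Hr m n x / x ^ d) \<longlongrightarrow> L) at_top" "L \<noteq> 0" "m \<ge> n" "even (m + n)"
  shows "degree (hpoly m n) = d"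
proof (rule deg_from_limit)
  show "((\<lambda>x::real. poly (hpoly m n) (of_real x) / of_real x ^ d) \<longlongrightarrow> of_real L) at_top"
    using tendsto_of_real[OF assms(1), where 'a=complex]
    by (simp add: hpoly_eval[OF assms(3,4)] hfun_real)
qed (use assms in simp)

lemma split_div:
  fixes c e a1 b1 a2 b2 x :: real
  assumes "x \<noteq> 0"
  shows "c * (a1^k * b1^j + e * a2^k * b2^j) / (x^k * x^j) = c * ((a1/x)^k * (b1/x)^j + e * (a2/x)^k * (b2/x)^j)"
proof -
  have "c * (a1^k * b1^j + e * a2^k * b2^j) / (x^k * x^j) = c * ((a1^k * b1^j) / (x^k * x^j) + e * ((a2^k * b2^j) / (x^k * x^j)))"
    using assms by (simp add: field_simps)
  also have "\<dots> = c * ((a1/x)^k * (b1/x)^j + e * (a2/x)^k * (b2/x)^j)"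
    by (simp add: power_divide)
  finally show ?thesis .
qed

lemma h_deg:
  assumes "n \<ge> 1" and "m \<ge> n" and "even (m + n)"
  shows "degree (hpoly m n) = (if m > n then m else 2 * (m div 2))"
proof -
  define k where "k = (m + n) div 2"
  define j where "j = (m - n) div 2"
  have kj: "k + j = m" using assms by (simp add: k_def j_def) presburger
  have Hr': "Hr m n x = (1 / sqrt 2) * ((sqrt (x^2+1) + 1) ^ k * (sqrt (x^2+1) + x) ^ j
      + (-1) ^ n * (sqrt (x^2+1) - 1) ^ k * (sqrt (x^2+1) - x) ^ j)" for x
    by (simp add: Hr_def k_def j_def)
  show ?thesis
  proof (cases "m > n")
    case True
    then have j0: "j > 0" using assms by (simp add: j_def) presburger
    have ev: "\<forall>\<^sub>F x in at_top. Hr m n x / x ^ m = (1 / sqrt 2) * (((sqrt (x^2+1) + 1) / x) ^ k * ((sqrt (x^2+1) + x) / x) ^ j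
      + (-1) ^ n * ((sqrt (x^2+1) - 1) / x) ^ k * ((sqrt (x^2+1) - x) / x) ^ j)"
      using eventually_gt_at_top[of "0::real"]
    proof eventually_elim
      case (elim x)
      have xm: "x ^ m = x ^ k * x ^ j" using kj by (metis power_add)
      show ?case unfolding Hr' xm by (rule split_div) (use elim in simp)
    qed
    have "((\<lambda>x. (1 / sqrt 2) * (((sqrt (x^2+1) + 1) / x) ^ k * ((sqrt (x^2+1) + x) / x) ^ j
      + (-1) ^ n * ((sqrt (x^2+1) - 1) / x) ^ k * ((sqrt (x^2+1) - x) / x) ^ j)) \<longlongrightarrow>
      (1 / sqrt 2) * (1 ^ k * 2 ^ j + (-1) ^ n * 1 ^ k * 0 ^ j)) at_top"
      by (intro tendsto_intros l1 l2 l3 l4)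
    then have "((\<lambda>x. Hr m n x / x ^ m) \<longlongrightarrow> (1 / sqrt 2) * 2 ^ j) at_top"
      using tendsto_cong[OF ev] j0 by (simp add: zero_power)
    then have "degree (hpoly m n) = m" by (rule deg_from_real) (use assms in auto)
    then show ?thesis using True by simp
  next
    case False
    then have mn: "m = n" using assms by simp
    then have j0: "j = 0" and kn: "k = n" by (auto simp: j_def k_def)
    show ?thesis
    proof (cases "even n")
      case True
      have ev: "\<forall>\<^sub>F x in at_top. Hr m n x / x ^ n = (1 / sqrt 2) * (((sqrt (x^2+1) + 1) / x) ^ n
        + (-1) ^ n * ((sqrt (x^2+1) - 1) / x) ^ n)"
        using eventually_gt_at_top[of "0::real"]
      proof eventually_elim
        case (elim x)
        have "Hr m n x / x ^ n = Hr m n x / (x ^ k * x ^ j)" by (simp add: j0 kn)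
        also have "\<dots> = (1 / sqrt 2) * (((sqrt (x^2+1) + 1) / x) ^ k * ((sqrt (x^2+1) + x) / x) ^ j
          + (-1) ^ n * ((sqrt (x^2+1) - 1) / x) ^ k * ((sqrt (x^2+1) - x) / x) ^ j)"
          unfolding Hr' by (rule split_div) (use elim in simp)
        finally show ?case by (simp add: j0 kn)
      qed
      have "((\<lambda>x. (1 / sqrt 2) * (((sqrt (x^2+1) + 1) / x) ^ n
        + (-1) ^ n * ((sqrt (x^2+1) - 1) / x) ^ n)) \<longlongrightarrow> (1 / sqrt 2) * (1 ^ n + (-1) ^ n * 1 ^ n)) at_top"
        by (intro tendsto_intros l1 l2)
      then have "((\<lambda>x. Hr m n x / x ^ n) \<longlongrightarrow> (1 / sqrt 2) * 2) at_top"
        using tendsto_cong[OF ev] True by simp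
      then have "degree (hpoly m n) = n" by (rule deg_from_real) (use assms in auto)
      then show ?thesis using True mn by simp
    next
      case odd: False
      have ev: "\<forall>\<^sub>F x in at_top. Hr m n x / x ^ (n - 1) = (1 / sqrt 2) * 2 *
         (\<Sum>i<n. ((sqrt (x^2+1) - 1) / x) ^ (n - Suc i) * ((sqrt (x^2+1) + 1) / x) ^ i)"
        using eventually_gt_at_top[of "0::real"]
      proof eventually_elim
        case (elim x)
        define s where "s = sqrt (x^2+1)"
        have "Hr m n x = (1 / sqrt 2) * ((s + 1) ^ n - (s - 1) ^ n)"
          using odd by (simp add: Hr' j0 kn s_def)
        also have "\<dots> = (1 / sqrt 2) * 2 * (\<Sum>i<n. (s - 1) ^ (n - Suc i) * (s + 1) ^ i)"
          by (simp add: power_diff_sumr2)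
        finally have H: "Hr m n x = (1 / sqrt 2) * 2 * (\<Sum>i<n. (s - 1) ^ (n - Suc i) * (s + 1) ^ i)" .
        have e: "(\<Sum>i<n. (s - 1) ^ (n - Suc i) * (s + 1) ^ i) / x ^ (n - 1)
          = (\<Sum>i<n. ((s - 1) / x) ^ (n - Suc i) * ((s + 1) / x) ^ i)"
          unfolding sum_divide_distrib
        proof (rule sum.cong[OF refl])
          fix i assume "i \<in> {..<n}"
          then have "n - 1 = (n - Suc i) + i" by auto
          then have "x ^ (n - 1) = x ^ (n - Suc i) * x ^ i" by (metis power_add)
          then show "(s - 1) ^ (n - Suc i) * (s + 1) ^ i / x ^ (n - 1)
            = ((s - 1) / x) ^ (n - Suc i) * ((s + 1) / x) ^ i"
            using elim by (simp add: power_divide)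
        qed
        have "Hr m n x / x ^ (n - 1) = ((1 / sqrt 2) * 2) * ((\<Sum>i<n. (s - 1) ^ (n - Suc i) * (s + 1) ^ i) / x ^ (n - 1))"
          unfolding H by (rule times_divide_eq_right[symmetric])
        also have "\<dots> = ((1 / sqrt 2) * 2) * (\<Sum>i<n. ((s - 1) / x) ^ (n - Suc i) * ((s + 1) / x) ^ i)"
          by (simp only: e)
        finally show ?case by (simp only: s_def)
      qed
      have "((\<lambda>x. (1 / sqrt 2) * 2 *
         (\<Sum>i<n. ((sqrt (x^2+1) - 1) / x) ^ (n - Suc i) * ((sqrt (x^2+1) + 1) / x) ^ i)) \<longlongrightarrow>
          (1 / sqrt 2) * 2 * (\<Sum>i<n. 1 ^ (n - Suc i) * 1 ^ i)) at_top"
        by (intro tendsto_intros l1 l2)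
      then have "((\<lambda>x. Hr m n x / x ^ (n - 1)) \<longlongrightarrow> (1 / sqrt 2) * 2 * n) at_top"
        using tendsto_cong[OF ev] by simp
      then have "degree (hpoly m n) = n - 1" by (rule deg_from_real) (use assms in auto)
      then show ?thesis using odd mn by (simp add: odd_two_times_div_two_nat)
    qed
  qed
qed



lemma key_real:
  fixes a b :: real
  assumes "a > 0" "a^2 + b^2 < 1" "(a^2 - b^2 - 1)^2 + (2*a*b)^2 < 4 * (a^2 + b^2)"
  shows "(a - 1)^2 + b^2 \<le> (a^2 + b^2) * ((a + 1)^2 + b^2)"
proof -
  define r where "r = a^2 + b^2"
  have eq3: "(a^2 - b^2 - 1)^2 + (2*a*b)^2 = r^2 - 2 * a^2 + 2 * b^2 + 1"
    unfolding r_def by (simp add: power2_eq_square algebra_simps)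
  have "(1 - r)^2 < (2*a)^2"
  proof -
    have "(1 - r)^2 = r^2 - 2 * r + 1" by (simp add: power2_eq_square algebra_simps)
    moreover have "(2*a)^2 = 4 * a^2" by (simp add: power2_eq_square)
    moreover have "r^2 - 2 * a^2 + 2 * b^2 + 1 < 4 * (a^2 + b^2)" using assms(3) unfolding eq3 .
    note this
    moreover have "r^2 - 2 * r + 1 < 4 * a^2"
    proof -
      have ra: "a^2 = r - b^2" using r_def by simp
      show ?thesis using \<open>r^2 - 2 * a^2 + 2 * b^2 + 1 < 4 * (a^2 + b^2)\<close> unfolding ra by (simp add: algebra_simps)
    qed
    ultimately show ?thesis by simp
  qed
  then have h: "1 - r < 2 * a"
    by (rule power2_less_imp_less) (use assms(1) in simp)
  have r0: "r \<ge> 0" unfolding r_def by simp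
  have "(1 - r) * (1 + r) \<le> 2 * a * (1 + r)" using h r0 by (intro mult_right_mono) auto
  moreover have "(1 - r) * (1 + r) = 1 - r^2" by (simp add: power2_eq_square algebra_simps)
  moreover have "2 * a * (1 + r) = 2 * a + 2 * a * r" by (simp add: algebra_simps)
  moreover have "(a - 1)^2 + b^2 = r - 2 * a + 1" unfolding r_def by (simp add: power2_eq_square algebra_simps)
  moreover have "(a^2 + b^2) * ((a + 1)^2 + b^2) = r^2 + 2 * a * r + r"
    unfolding r_def by (simp add: power2_eq_square algebra_simps)
  ultimately show ?thesis by linarith
qed

lemma key_cx:
  fixes v :: complex
  assumes "Re v > 0" "cmod v < 1" "cmod (v^2 - 1) < 2 * cmod v"
  shows "cmod (v - 1) \<le> cmod v * cmod (v + 1)"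
proof -
  have "cmod (v^2 - 1)^2 < (2 * cmod v)^2"
    using assms(3) by (intro power_strict_mono) auto
  then have h3: "(Re v^2 - Im v^2 - 1)^2 + (2 * Re v * Im v)^2 < 4 * (Re v^2 + Im v^2)"
  proof -
    have e: "cmod (v^2 - 1)^2 = (Re v^2 - Im v^2 - 1)^2 + (2 * Re v * Im v)^2"
      by (simp only: cmod_power2) (simp add: power2_eq_square algebra_simps)
    have "(2 * cmod v)^2 = 4 * (Re v^2 + Im v^2)" by (simp add: power_mult_distrib cmod_power2)
    then show ?thesis using \<open>cmod (v^2 - 1)^2 < (2 * cmod v)^2\<close> e by simp
  qed
  have "cmod v ^ 2 < 1" using assms(2) by (simp add: power_less_one_iff)
  then have h2: "Re v^2 + Im v^2 < 1" by (simp add: cmod_power2)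
  have "cmod (v - 1)^2 \<le> (cmod v * cmod (v + 1))^2"
    using key_real[OF assms(1) h2 h3] by (simp add: power_mult_distrib cmod_power2)
  then show ?thesis by (rule power2_le_imp_le) simp
qed






lemma h_nonzero:
  assumes "n \<ge> 1" and "m \<ge> n" and "even (m + n)" and "cmod z < 1"
  shows "hfun m n z \<noteq> 0"
proof
  assume h0: "hfun m n z = 0"
  define k where "k = (m + n) div 2"
  define j where "j = (m - n) div 2"
  define s where "s = csqrt (z^2 + 1)"
  have s2: "s^2 = z^2 + 1" by (simp add: s_def)
  have jk: "j < k" using assms by (simp add: k_def j_def)
  have Res: "Re s > 0"
  proof -
    have "Re s \<ge> 0" unfolding s_def by (rule Re_csqrt)
    moreover have "Re s \<noteq> 0"
    proof
      assume r0: "Re s = 0"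
      then have "s = \<i> * of_real (Im s)" by (simp add: complex_eq_iff)
      then have "s^2 = (\<i> * of_real (Im s))^2" by (rule arg_cong[where f="\<lambda>x. x^2"])
      then have "s^2 = \<i>^2 * of_real (Im s) ^ 2" by (simp only: power_mult_distrib)
      then have si: "s^2 = - of_real (Im s ^ 2)" by simp
      have "z^2 = s^2 - 1" using s2 by simp
      also have "\<dots> = - of_real (Im s ^ 2 + 1)" using si by simp
      finally have "z^2 = - of_real (Im s ^ 2 + 1)" .
      then have "cmod (z^2) = Im s ^ 2 + 1" by (simp only: norm_minus_cancel norm_of_real) simp
      moreover have "cmod (z^2) < 1" using assms(4) by (simp add: norm_power power_less_one_iff)
      ultimately show False using zero_le_power2[of "Im s"] by linarith
    qed
    ultimately show ?thesis by simp
  qed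
  define v where "v = s + z"
  define w where "w = s - z"
  have vw: "v * w = 1" using s2 by (simp add: v_def w_def algebra_simps power2_eq_square)
  then have v0: "v \<noteq> 0" by auto
  have w_eq: "w = 1 / v" using vw v0 by (simp add: field_simps)
  define A where "A = cmod (s + 1)"
  define B where "B = cmod (s - 1)"
  define V where "V = cmod v"
  define W where "W = cmod w"
  have VW: "V * W = 1" using vw by (simp add: V_def W_def flip: norm_mult)
  have V0: "V > 0" using v0 by (simp add: V_def)
  have AB: "B < A"
  proof -
    have e1: "B^2 = (Re s - 1)^2 + Im s^2" unfolding B_def by (simp only: cmod_power2) simp
    have e2: "A^2 = (Re s + 1)^2 + Im s^2" unfolding A_def by (simp only: cmod_power2) simp
    have "B^2 < A^2" using Res unfolding e1 e2 by (simp add: power2_eq_square algebra_simps)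
    then show ?thesis unfolding A_def B_def by (simp add: power_less_imp_less_base)
  qed
  have B0: "B \<ge> 0" by (simp add: B_def)
  have eq0: "(s + 1) ^ k * v ^ j + (-1) ^ n * (s - 1) ^ k * w ^ j = 0"
    using h0 by (simp add: hfun_def Let_def s_def k_def j_def v_def w_def)
  then have "(s + 1) ^ k * v ^ j = - ((-1) ^ n * (s - 1) ^ k * w ^ j)"
    by (simp add: eq_neg_iff_add_eq_0)
  then have "cmod ((s + 1) ^ k * v ^ j) = cmod ((-1) ^ n * (s - 1) ^ k * w ^ j)" by simp
  then have EQ: "A ^ k * V ^ j = B ^ k * W ^ j"
    by (simp add: norm_mult norm_power A_def B_def V_def W_def)
  have k1: "k \<ge> 1" using jk by simp
  have AkBk: "B ^ k < A ^ k" using AB B0 k1 by (intro power_strict_mono) auto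
  show False
  proof (cases "V \<ge> 1")
    case True
    have "W = 1 / V" using VW V0 by (simp add: field_simps)
    then have W1: "W \<le> 1" using True by simp
    have "A ^ k \<le> A ^ k * V ^ j" using True AB B0 by (simp add: one_le_power)
    moreover have "B ^ k * W ^ j \<le> B ^ k"
      using W1 B0 by (simp add: W_def mult_left_le power_le_one)
    ultimately show False using EQ AkBk by simp
  next
    case False
    then have V1: "V < 1" by simp
    have Rev: "Re v > 0"
    proof -
      have "Re s = (Re v + Re w) / 2" by (simp add: v_def w_def)
      then have "Re s = (Re v + Re (1 / v)) / 2" by (simp only: w_eq)
      moreover have "Re (1 / v) = Re v / (cmod v)^2" by (simp add: Re_divide cmod_power2)
      ultimately have "Re v * (1 + 1 / V^2) = 2 * Re s" by (simp add: V_def ring_distribs)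
      then have "Re v * (1 + 1 / V^2) > 0" using Res by simp
      moreover have "1 + 1 / V^2 > 0" by (simp add: add_pos_nonneg)
      ultimately show ?thesis by (simp add: zero_less_mult_iff)
    qed
    have zv: "z = (v - w) / 2" by (simp add: v_def w_def)
    have "cmod (v^2 - 1) < 2 * cmod v"
    proof -
      have "v^2 - 1 = v * (v - w)" using vw by (simp add: power2_eq_square algebra_simps)
      moreover have vmw: "v - w = 2 * z" by (simp add: v_def w_def)
      ultimately have "v^2 - 1 = v * (2 * z)" by simp
      then have "cmod (v^2 - 1) = V * (2 * cmod z)" by (simp add: V_def norm_mult)
      then show ?thesis using assms(4) V0 by (simp add: V_def)
    qed
    then have key: "cmod (v - 1) \<le> V * cmod (v + 1)"
      using key_cx[OF Rev] V1 by (simp add: V_def)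
    have sp: "s + 1 = (v + 1)^2 / (2 * v)" and sm: "s - 1 = (v - 1)^2 / (2 * v)"
    proof -
      have "s = (v + w) / 2" by (simp add: v_def w_def)
      then have sv: "s = (v + 1 / v) / 2" by (simp only: w_eq)
      show "s + 1 = (v + 1)^2 / (2 * v)" unfolding sv using v0 by (simp add: field_simps power2_eq_square)
      show "s - 1 = (v - 1)^2 / (2 * v)" unfolding sv using v0 by (simp add: field_simps power2_eq_square)
    qed
    have keyAB: "B \<le> V^2 * A"
    proof -
      have eA: "A = cmod (v + 1)^2 / (2 * V)" and eB: "B = cmod (v - 1)^2 / (2 * V)"
        unfolding A_def B_def sp sm by (simp_all add: V_def norm_divide norm_mult norm_power)
      have k2: "cmod (v - 1)^2 \<le> V^2 * cmod (v + 1)^2"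
      proof -
        have "cmod (v - 1)^2 \<le> (V * cmod (v + 1))^2" using key by (intro power_mono) auto
        then show ?thesis by (simp only: power_mult_distrib)
      qed
      have "B = cmod (v - 1)^2 / (2 * V)" by (rule eB)
      also have "\<dots> \<le> (V^2 * cmod (v + 1)^2) / (2 * V)"
        using k2 V0 by (intro divide_right_mono) auto
      also have "\<dots> = V^2 * A" by (simp add: eA)
      finally show ?thesis .
    qed
    have "B ^ k \<le> (V^2 * A) ^ k" using keyAB B0 by (intro power_mono)
    also have "\<dots> = A ^ k * V ^ (2 * k)" by (simp add: power_mult_distrib power_mult)
    also have "\<dots> < A ^ k * V ^ (2 * j)"
    proof -
      have "A > 0" using AB B0 by simp
      moreover have "V ^ (2 * k) < V ^ (2 * j)" using V0 V1 jk by (intro power_strict_decreasing) auto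
      ultimately show ?thesis by simp
    qed
    also have "\<dots> = B ^ k"
    proof -
      have "A ^ k * V ^ (2 * j) = (A ^ k * V ^ j) * V ^ j" by (simp add: mult_2 power_add)
      also have "\<dots> = B ^ k * (W * V) ^ j" using EQ by (simp add: power_mult_distrib)
      finally show ?thesis using VW by (simp add: mult.commute)
    qed
    finally show False by simp
  qed
qed

theorem mainTheorem2:
  fixes m n :: nat
  assumes "n \<ge> 1" and "m \<ge> n" and "even (m + n)"
  shows "degree (rho m n) = (if m > n then m else 2 * (m div 2))
    \<and> (\<exists>p :: complex poly. (\<forall>z. poly p z = hfun m n z)
         \<and> degree p = degree (rho m n)
         \<and> Im (hfun m n 0) = 0 \<and> Re (hfun m n 0) > 0
         \<and> (\<forall>z. cmod z < 1 \<longrightarrow> hfun m n z \<noteq> 0))"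
proof -
  define k where "k = (m + n) div 2"
  have k1: "k \<ge> 1" using assms by (simp add: k_def)
  have h0: "hfun m n 0 = complex_of_real (2 ^ k / sqrt 2)"
    using k1 by (simp add: hfun_def k_def[symmetric] zero_power)
  show ?thesis
  proof (intro conjI exI allI impI)
    show "degree (rho m n) = (if m > n then m else 2 * (m div 2))" by (rule rho_deg[OF assms])
    show "poly (hpoly m n) z = hfun m n z" for z by (rule hpoly_eval[OF assms(2,3)])
    show "degree (hpoly m n) = degree (rho m n)" using rho_deg[OF assms] h_deg[OF assms] by simp
    show "Im (hfun m n 0) = 0" using h0 by simp
    show "Re (hfun m n 0) > 0" using h0 by simp
    show "hfun m n z \<noteq> 0" if "cmod z < 1" for z by (rule h_nonzero[OF assms that])
  qed
qed

end
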